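(* Let $q$ be a prime power. Let $C_1=[n,k_1,d_1]_q$ and $C_2=[n,k_2,d_2]_q$ be linear codes over $\mathbb{F}_q$ with $C_2\subset C_1$ (giving, via the CSS construction, an AQECC $[[n,k,d_z/d_x]]_q$, $k=k_1-k_2$), and let $C_3=[n^{*},k_3,d_3]_q$ and $C_4=[n^{*},k_4,d_4]_q$ be linear codes over $\mathbb{F}_q$ with $C_4\subset C_3$ (giving an AQECC $[[n^{*},k^{*},d_z^{*}/d_x^{*}]]_q$, $k^{*}=k_3-k_4$). Let $d_2^{\perp}$ and $d_4^{\perp}$ be the minimum distances of the Euclidean duals $C_2^{\perp}$ and $C_4^{\perp}$. Then there exists an AQECC with parameters $[[n+n^{*}, k+k^{*}, d_z^{\diamond}/d_x^{\diamond}]]_q=[[n+n^{*},(k_1+k_3)-(k_2+k_4), d_z^{\diamond}/d_x^{\diamond}]]_q$, where $d_z^{\diamond}\geq\min\{d_1,d_3\}$ and $d_x^{\diamond}\geq\min\{d_2^{\perp},d_4^{\perp}\}$.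
   Context: An AQECC $[[n,k,d_z/d_x]]_q$ is a $q^k$-dimensional subspace of $\mathbb{C}^{q^n}$ correcting all qudit-flip errors up to $\lfloor (d_x-1)/2\rfloor$ and all phase-shift errors up to $\lfloor (d_z-1)/2\rfloor$. CSS construction: if $C_2\subset C_1\subseteq\mathbb{F}_q^n$ are linear of dimensions $k_2<k_1$, there is an AQECC $[[n,k_1-k_2,d_z/d_x]]_q$ with $d_z=\mathrm{wt}(C_1\setminus C_2)$, $d_x=\mathrm{wt}(C_2^{\perp}\setminus C_1^{\perp})$; such a code is said to be derived from $C_1,C_2$. *)

theory Defs
  imports "HOL-Analysis.Analysis"
begin

text \<open>Vectors of length n over F_q are elements of 'a^'n, with 'a a finite field
  (so q = CARD('a) is a prime power) and n = CARD('n).\<close>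

definition hamming_wt :: "'a::zero ^ 'n \<Rightarrow> nat" where
  "hamming_wt x = card {i. x $ i \<noteq> 0}"

definition wt :: "('a::zero ^ 'n) set \<Rightarrow> nat" where
  "wt S = Inf (hamming_wt ` S)"

definition min_dist :: "('a::zero ^ 'n) set \<Rightarrow> nat" where
  "min_dist C = wt (C - {0})"

definition euclid_dual :: "('a::comm_ring_1 ^ 'n::finite) set \<Rightarrow> ('a ^ 'n) set" where
  "euclid_dual C = {y. \<forall>x\<in>C. (\<Sum>i\<in>UNIV. x $ i * y $ i) = 0}"

definition css_aqecc ::
  "('a::{field,finite} ^ 'n::finite) set \<Rightarrow> ('a ^ 'n) set \<Rightarrow> nat \<Rightarrow> nat \<Rightarrow> nat \<Rightarrow> bool" where
  "css_aqecc C1 C2 k dz dx \<longleftrightarrow>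
     vec.subspace C1 \<and> vec.subspace C2 \<and> C2 \<subset> C1 \<and>
     k = vec.dim C1 - vec.dim C2 \<and>
     dz = wt (C1 - C2) \<and> dx = wt (euclid_dual C2 - euclid_dual C1)"

end

theory Submission imports Defs begin
lemma dual_strict:
  fixes C1 C2 :: "('a::{field,finite} ^ 'n::finite) set"
  assumes "vec.subspace C2" "C2 \<subset> C1"
  shows "\<exists>y. y \<in> euclid_dual C2 \<and> y \<notin> euclid_dual C1"
proof -
  obtain x where x: "x \<in> C1" "x \<notin> C2" using assms(2) by blast
  obtain B where B: "B \<subseteq> C2" "vec.independent B" "C2 \<subseteq> vec.span B"
    by (rule vec.basis_exists[of C2])
  have sp: "vec.span B \<subseteq> C2" using B(1) assms(1) by (simp add: vec.span_minimal)
  have xB: "x \<notin> vec.span B" using sp x by blast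
  have ind: "vec.independent (insert x B)" using B(2) xB by (simp add: vec.independent_insert)
  obtain k :: 'n where True by blast
  obtain g where g: "Vector_Spaces.linear (*s) (*s) g"
     "\<forall>v\<in>insert x B. g v = (if v = x then (axis k 1 :: 'a^'n) else 0)"
    using vec.linear_independent_extend[OF ind, of "\<lambda>v. if v = x then (axis k 1 :: 'a^'n) else 0"] by blast
  have g0: "g c = 0" if "c \<in> C2" for c
  proof -
    have "g c = (\<lambda>_. 0) c"
      by (rule vec.linear_eq_on[OF g(1) _ ]) (use g(2) B that x in \<open>auto simp: vec.linear_zero\<close>)
    then show ?thesis by simp
  qed
  define y where "y = (\<chi> j. g (axis j 1) $ k)"
  have comp: "(\<Sum>i\<in>UNIV. v $ i * y $ i) = g v $ k" for v
    using Cartesian_Space.linear_componentwise[OF g(1), of v k] by (simp add: y_def)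
  show ?thesis
  proof (intro exI conjI)
    show "y \<in> euclid_dual C2" by (auto simp: euclid_dual_def comp g0)
    show "y \<notin> euclid_dual C1" using x g(2) by (auto simp: euclid_dual_def comp intro!: bexI[of _ x])
  qed
qed

definition inl :: "'a::zero ^ 'n::finite \<Rightarrow> 'a ^ ('n + 'm::finite)" where
  "inl x = (\<chi> k. case k of Inl i \<Rightarrow> x $ i | Inr j \<Rightarrow> 0)"
definition inr :: "'a::zero ^ 'm::finite \<Rightarrow> 'a ^ ('n::finite + 'm)" where
  "inr x = (\<chi> k. case k of Inl i \<Rightarrow> 0 | Inr j \<Rightarrow> x $ j)"
definition pl :: "'a ^ ('n::finite + 'm::finite) \<Rightarrow> 'a ^ 'n" where
  "pl v = (\<chi> i. v $ Inl i)"
definition pr :: "'a ^ ('n::finite + 'm::finite) \<Rightarrow> 'a ^ 'm" where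
  "pr v = (\<chi> i. v $ Inr i)"

lemma inl_nth[simp]: "inl x $ Inl i = x $ i" "inl x $ Inr j = 0"
  by (simp_all add: inl_def)
lemma inr_nth[simp]: "inr x $ Inl i = 0" "inr x $ Inr j = x $ j"
  by (simp_all add: inr_def)
lemma pl_nth[simp]: "pl v $ i = v $ Inl i" by (simp add: pl_def)
lemma pr_nth[simp]: "pr v $ i = v $ Inr i" by (simp add: pr_def)

lemma pl_add[simp]: "pl (inl x + inr y) = (x :: 'a::comm_monoid_add ^ 'n::finite)"
  by (simp add: vec_eq_iff)
lemma pr_add[simp]: "pr (inl x + inr y) = (y :: 'a::comm_monoid_add ^ 'm::finite)"
  by (simp add: vec_eq_iff)
lemma split_v: "v = inl (pl v) + inr (pr (v :: 'a::comm_monoid_add ^ ('n::finite + 'm::finite)))"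
  unfolding vec_eq_iff by (intro allI, case_tac i) auto

lemma linear_inl: "Vector_Spaces.linear (*s) (*s) (inl :: 'a::field ^ 'n::finite \<Rightarrow> 'a ^ ('n + 'm::finite))"
  unfolding Vector_Spaces.linear_iff by (auto simp: vec.vector_space_axioms vec_eq_iff inl_def inr_def split: sum.splits)
lemma linear_inr: "Vector_Spaces.linear (*s) (*s) (inr :: 'a::field ^ 'm::finite \<Rightarrow> 'a ^ ('n::finite + 'm))"
  unfolding Vector_Spaces.linear_iff by (auto simp: vec.vector_space_axioms vec_eq_iff inl_def inr_def split: sum.splits)
lemma inj_inl: "inj inl" unfolding inj_on_def vec_eq_iff by (metis inl_nth(1))
lemma inj_inr: "inj inr" unfolding inj_on_def vec_eq_iff by (metis inr_nth(2))

lemma D_eq: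
  "{v. pl v \<in> A \<and> pr v \<in> B} =
   {a + b |a b. a \<in> (inl :: 'a::comm_monoid_add ^ 'n::finite \<Rightarrow> 'a ^ ('n + 'm::finite)) ` A \<and> b \<in> inr ` B}"
proof (intro equalityI subsetI)
  fix v assume "v \<in> {v. pl v \<in> A \<and> pr v \<in> B}"
  then show "v \<in> {a + b |a b. a \<in> (inl :: 'a::comm_monoid_add ^ 'n::finite \<Rightarrow> 'a ^ ('n + 'm::finite)) ` A \<and> b \<in> inr ` B}"
    using split_v[of v] by blast
qed auto

lemma dim_D:
  fixes A :: "('a::field ^ 'n::finite) set" and B :: "('a ^ 'm::finite) set"
  assumes "vec.subspace A" "vec.subspace B"
  shows "vec.dim {v :: 'a ^ ('n + 'm). pl v \<in> A \<and> pr v \<in> B} = vec.dim A + vec.dim B"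
    and "vec.subspace {v :: 'a ^ ('n + 'm). pl v \<in> A \<and> pr v \<in> B}"
proof -
  have sA: "vec.subspace ((inl :: _ \<Rightarrow> 'a ^ ('n + 'm)) ` A)"
    using vec.linear_subspace_image[OF linear_inl assms(1)] .
  have sB: "vec.subspace ((inr :: _ \<Rightarrow> 'a ^ ('n + 'm)) ` B)"
    using vec.linear_subspace_image[OF linear_inr assms(2)] .
  have dA: "vec.dim ((inl :: _ \<Rightarrow> 'a ^ ('n + 'm)) ` A) = vec.dim A"
    by (rule vec.dim_image_eq[OF linear_inl]) (meson inj_inl inj_on_subset subset_UNIV)
  have dB: "vec.dim ((inr :: _ \<Rightarrow> 'a ^ ('n + 'm)) ` B) = vec.dim B"
    by (rule vec.dim_image_eq[OF linear_inr]) (meson inj_inr inj_on_subset subset_UNIV)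
  have int: "(inl :: _ \<Rightarrow> 'a ^ ('n + 'm)) ` A \<inter> inr ` B \<subseteq> {0}"
  proof
    fix v assume "v \<in> (inl :: _ \<Rightarrow> 'a ^ ('n + 'm)) ` A \<inter> inr ` B"
    then obtain a b where ab: "v = inl a" "v = inr b" by blast
    have "v $ k = 0" for k
    proof (cases k)
      case (Inl i) then show ?thesis using ab(2) by simp
    next
      case (Inr j) then show ?thesis using ab(1) by simp
    qed
    then show "v \<in> {0}" by (simp add: vec_eq_iff)
  qed
  have e: "vec.dim ((inl :: _ \<Rightarrow> 'a ^ ('n + 'm)) ` A \<inter> inr ` B) = 0"
    using int by (simp only: vec.dim_eq_0)
  show "vec.dim {v :: 'a ^ ('n + 'm). pl v \<in> A \<and> pr v \<in> B} = vec.dim A + vec.dim B"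
    unfolding D_eq using vec.dim_sums_Int[OF sA sB] dA dB e by linarith
  show "vec.subspace {v :: 'a ^ ('n + 'm). pl v \<in> A \<and> pr v \<in> B}"
    unfolding D_eq by (rule vec.subspace_sums[OF sA sB])
qed

lemma sum_plus_univ: "(\<Sum>k\<in>(UNIV :: ('n::finite + 'm::finite) set). f k) =
   (\<Sum>i\<in>UNIV. f (Inl i)) + (\<Sum>j\<in>UNIV. f (Inr j))"
  using sum.Plus[of "UNIV :: 'n set" "UNIV :: 'm set" f] by (simp add: comp_def)

lemma dual_D:
  fixes A :: "('a::field ^ 'n::finite) set" and B :: "('a ^ 'm::finite) set"
  assumes "0 \<in> A" "0 \<in> B"
  shows "y \<in> euclid_dual {v :: 'a ^ ('n + 'm). pl v \<in> A \<and> pr v \<in> B} \<longleftrightarrow>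
         pl y \<in> euclid_dual A \<and> pr y \<in> euclid_dual B"
proof
  assume h: "y \<in> euclid_dual {v :: 'a ^ ('n + 'm). pl v \<in> A \<and> pr v \<in> B}"
  show "pl y \<in> euclid_dual A \<and> pr y \<in> euclid_dual B"
  proof
    show "pl y \<in> euclid_dual A"
      unfolding euclid_dual_def
    proof safe
      fix x assume "x \<in> A"
      then have "inl x + inr 0 \<in> {v :: 'a ^ ('n + 'm). pl v \<in> A \<and> pr v \<in> B}"
        using assms by simp
      then have "(\<Sum>k\<in>UNIV. (inl x + inr 0) $ k * y $ k) = 0"
        using h unfolding euclid_dual_def by blast
      then show "(\<Sum>i\<in>UNIV. x $ i * pl y $ i) = 0"
        by (simp add: sum_plus_univ)
    qed
    show "pr y \<in> euclid_dual B"
      unfolding euclid_dual_def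
    proof safe
      fix x assume "x \<in> B"
      then have "inl 0 + inr x \<in> {v :: 'a ^ ('n + 'm). pl v \<in> A \<and> pr v \<in> B}"
        using assms by simp
      then have "(\<Sum>k\<in>UNIV. (inl 0 + inr x) $ k * y $ k) = 0"
        using h unfolding euclid_dual_def by blast
      then show "(\<Sum>i\<in>UNIV. x $ i * pr y $ i) = 0"
        by (simp add: sum_plus_univ)
    qed
  qed
next
  assume h2: "pl y \<in> euclid_dual A \<and> pr y \<in> euclid_dual B"
  show "y \<in> euclid_dual {v :: 'a ^ ('n + 'm). pl v \<in> A \<and> pr v \<in> B}"
    unfolding euclid_dual_def
  proof safe
    fix v :: "'a ^ ('n + 'm)" assume v: "pl v \<in> A" "pr v \<in> B"
    have a: "(\<Sum>i\<in>UNIV. pl v $ i * pl y $ i) = 0" using h2 v unfolding euclid_dual_def by blast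
    have b: "(\<Sum>i\<in>UNIV. pr v $ i * pr y $ i) = 0" using h2 v unfolding euclid_dual_def by blast
    show "(\<Sum>i\<in>UNIV. v $ i * y $ i) = 0" using a b by (simp add: sum_plus_univ)
  qed
qed

lemma hw_pl: "hamming_wt (pl v) \<le> hamming_wt (v :: 'a::zero ^ ('n::finite + 'm::finite))"
  unfolding hamming_wt_def
  by (rule card_inj_on_le[of Inl]) auto
lemma hw_pr: "hamming_wt (pr v) \<le> hamming_wt (v :: 'a::zero ^ ('n::finite + 'm::finite))"
  unfolding hamming_wt_def
  by (rule card_inj_on_le[of Inr]) auto

lemma min_dist_le: "x \<in> C \<Longrightarrow> x \<noteq> 0 \<Longrightarrow> min_dist C \<le> hamming_wt x"
  unfolding min_dist_def wt_def by (rule cInf_lower) auto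

lemma wt_ge: "S \<noteq> {} \<Longrightarrow> (\<And>s. s \<in> S \<Longrightarrow> b \<le> hamming_wt s) \<Longrightarrow> b \<le> wt S"
  unfolding wt_def by (rule cInf_greatest) auto

lemma zero_dual: "0 \<in> euclid_dual C" by (simp add: euclid_dual_def)

theorem theorem4:
  fixes C1 C2 :: "('a::{field,finite} ^ 'n::finite) set"
    and C3 C4 :: "('a ^ 'm::finite) set"
  assumes "vec.subspace C1" and "vec.subspace C2" and "C2 \<subset> C1"
    and "vec.subspace C3" and "vec.subspace C4" and "C4 \<subset> C3"
  shows "\<exists>(D1 :: ('a ^ ('n + 'm)) set) D2 dz dx.
           css_aqecc D1 D2
             ((vec.dim C1 + vec.dim C3) - (vec.dim C2 + vec.dim C4)) dz dx \<and>
           dz \<ge> min (min_dist C1) (min_dist C3) \<and>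
           dx \<ge> min (min_dist (euclid_dual C2)) (min_dist (euclid_dual C4))"
proof -
  define D1 where "D1 = {v :: 'a ^ ('n + 'm). pl v \<in> C1 \<and> pr v \<in> C3}"
  define D2 where "D2 = {v :: 'a ^ ('n + 'm). pl v \<in> C2 \<and> pr v \<in> C4}"
  have z: "0 \<in> C1" "0 \<in> C2" "0 \<in> C3" "0 \<in> C4"
    using assms by (auto simp: vec.subspace_0)
  obtain x where x: "x \<in> C1" "x \<notin> C2" using assms(3) by blast
  have xD: "inl x + inr 0 \<in> D1 - D2" using x z by (simp add: D1_def D2_def)
  have "D2 \<subseteq> D1" using assms(3,6) unfolding D1_def D2_def by blast
  then have sub: "D2 \<subset> D1" using xD by blast
  obtain w where w: "w \<in> euclid_dual C2" "w \<notin> euclid_dual C1"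
    using dual_strict[OF assms(2,3)] by blast
  have wD: "inl w + inr 0 \<in> euclid_dual D2 - euclid_dual D1"
    using w z unfolding D1_def D2_def by (simp add: dual_D zero_dual)
  have css: "css_aqecc D1 D2 ((vec.dim C1 + vec.dim C3) - (vec.dim C2 + vec.dim C4))
      (wt (D1 - D2)) (wt (euclid_dual D2 - euclid_dual D1))"
    unfolding css_aqecc_def using sub dim_D[OF assms(1,4)] dim_D[OF assms(2,5)]
    by (simp add: D1_def D2_def)
  have dz: "min (min_dist C1) (min_dist C3) \<le> wt (D1 - D2)"
  proof (rule wt_ge)
    show "D1 - D2 \<noteq> {}" using xD by blast
  next
    fix s assume s: "s \<in> D1 - D2"
    show "min (min_dist C1) (min_dist C3) \<le> hamming_wt s"
    proof (cases "pl s \<in> C2")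
      case False
      then have "pl s \<noteq> 0" using z by auto
      then have "min_dist C1 \<le> hamming_wt (pl s)" using s by (intro min_dist_le) (auto simp: D1_def)
      then show ?thesis using hw_pl[of s] by linarith
    next
      case True
      then have "pr s \<notin> C4" using s by (auto simp: D2_def)
      then have "pr s \<noteq> 0" using z by auto
      then have "min_dist C3 \<le> hamming_wt (pr s)" using s by (intro min_dist_le) (auto simp: D1_def)
      then show ?thesis using hw_pr[of s] by linarith
    qed
  qed
  have dx: "min (min_dist (euclid_dual C2)) (min_dist (euclid_dual C4)) \<le> wt (euclid_dual D2 - euclid_dual D1)"
  proof (rule wt_ge)
    show "euclid_dual D2 - euclid_dual D1 \<noteq> {}" using wD by blast
  next
    fix s assume s: "s \<in> euclid_dual D2 - euclid_dual D1"
    then have s2: "pl s \<in> euclid_dual C2" "pr s \<in> euclid_dual C4"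
      and s1: "\<not> (pl s \<in> euclid_dual C1 \<and> pr s \<in> euclid_dual C3)"
      using z unfolding D1_def D2_def by (auto simp: dual_D)
    show "min (min_dist (euclid_dual C2)) (min_dist (euclid_dual C4)) \<le> hamming_wt s"
    proof (cases "pl s \<in> euclid_dual C1")
      case False
      then have "pl s \<noteq> 0" using zero_dual[of C1] by auto
      then have "min_dist (euclid_dual C2) \<le> hamming_wt (pl s)" using s2 by (intro min_dist_le)
      then show ?thesis using hw_pl[of s] by linarith
    next
      case True
      then have "pr s \<noteq> 0" using s1 zero_dual[of C3] by auto
      then have "min_dist (euclid_dual C4) \<le> hamming_wt (pr s)" using s2 by (intro min_dist_le)
      then show ?thesis using hw_pr[of s] by linarith
    qed
  qed
  show ?thesis using css dz dx by blast
qed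

end
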